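(* Let $P$ be the non-symmetric operad of sets in which $P(n)$ is the set of all $n$-tuples $(f_1,\dots,f_n)$ of order-preserving continuous maps $f_i:[0,1)\to[0,1)$ such that whenever $i<j$ and $t_i,t_j\in[0,1)$ we have $f_i(t_i)<f_j(t_j)$; the identity is $\mathrm{id}_{[0,1)}\in P(1)$, and composition is $(f_1,\dots,f_n)\circ((f_1^1,\dots,f_1^{k_1}),\dots,(f_n^1,\dots,f_n^{k_n}))=(f_1f_1^1,\dots,f_1f_1^{k_1},\dots,f_nf_n^1,\dots,f_nf_n^{k_n})$. Then: (1) an element $g\in P(1)$ is constant (in the operadic sense below) if and only if the map $g:[0,1)\to[0,1)$ is constant; (2) an element $(f_1,\dots,f_n)\in P(n)$ is surjective (in the operadic sense below) if and only if the union of the images of $f_1,\dots,f_n$ is $[0,1)$. Moreover both statements remain true when $P$ is replaced by its reverse $\overline{P}$.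
   Context: For a non-symmetric operad of sets $Q$ (sets $Q(n)$, identity $\mathrm{id}\in Q(1)$, composition $\theta\circ(\theta_1,\dots,\theta_n)$): an element $\gamma\in Q(1)$ is called constant if for all $n\in\mathbb{N}$ and all $\phi,\phi'\in Q(n)$, $\gamma\circ(\phi)=\gamma\circ(\phi')$; an element $\phi\in Q(n)$ is called surjective if for all $\theta,\theta'\in Q(1)$, $\theta\circ(\phi)=\theta'\circ(\phi)$ implies $\theta=\theta'$. The reverse $\overline{Q}$ of $Q$ has $\overline{Q}(n)=Q(n)$, the same identity, and composition $\theta\circ_{\mathrm{rev}}(\theta_1,\dots,\theta_n)=\theta\circ(\theta_n,\dots,\theta_1)$. An element $(g)\in P(1)$ is written simply $g$. *)

theory Defs
  imports "HOL-Analysis.Analysis"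
begin

text \<open>A non-symmetric operad of sets is represented by its carrier family
  Q :: nat => 'a set and its composition comp theta [theta_1, ..., theta_n].
  Elements of Q(1) are composed with a single-element list.\<close>

definition op_constant :: "(nat \<Rightarrow> 'a set) \<Rightarrow> ('a \<Rightarrow> 'a list \<Rightarrow> 'a) \<Rightarrow> 'a \<Rightarrow> bool" where
  "op_constant Q cmp \<gamma> \<longleftrightarrow>
     (\<forall>n::nat. \<forall>\<phi>\<in>Q n. \<forall>\<phi>'\<in>Q n. cmp \<gamma> [\<phi>] = cmp \<gamma> [\<phi>'])"

definition op_surjective :: "(nat \<Rightarrow> 'a set) \<Rightarrow> ('a \<Rightarrow> 'a list \<Rightarrow> 'a) \<Rightarrow> 'a \<Rightarrow> bool" where
  "op_surjective Q cmp \<phi> \<longleftrightarrow>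
     (\<forall>\<theta>\<in>Q 1. \<forall>\<theta>'\<in>Q 1. cmp \<theta> [\<phi>] = cmp \<theta>' [\<phi>] \<longrightarrow> \<theta> = \<theta>')"

definition rev_comp :: "('a \<Rightarrow> 'a list \<Rightarrow> 'a) \<Rightarrow> 'a \<Rightarrow> 'a list \<Rightarrow> 'a" where
  "rev_comp cmp \<theta> \<theta>s = cmp \<theta> (rev \<theta>s)"

text \<open>A map [0,1) -> [0,1) is represented as a function real => real that is
  0 outside [0,1) (so that equality of maps is equality of functions).\<close>

definition I01 :: "real set" where "I01 = {0..<1}"

definition is_map01 :: "(real \<Rightarrow> real) \<Rightarrow> bool" where
  "is_map01 f \<longleftrightarrow> f ` I01 \<subseteq> I01 \<and> (\<forall>x. x \<notin> I01 \<longrightarrow> f x = 0)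
      \<and> mono_on I01 f \<and> continuous_on I01 f"

definition Pop :: "nat \<Rightarrow> (real \<Rightarrow> real) list set" where
  "Pop n = {fs. length fs = n \<and> (\<forall>f\<in>set fs. is_map01 f) \<and>
      (\<forall>i j. i < j \<and> j < n \<longrightarrow> (\<forall>s\<in>I01. \<forall>t\<in>I01. (fs ! i) s < (fs ! j) t))}"

definition comp01 :: "(real \<Rightarrow> real) \<Rightarrow> (real \<Rightarrow> real) \<Rightarrow> real \<Rightarrow> real" where
  "comp01 f g = (\<lambda>x. if x \<in> I01 then f (g x) else 0)"

definition Pcomp :: "(real \<Rightarrow> real) list \<Rightarrow> (real \<Rightarrow> real) list list \<Rightarrow> (real \<Rightarrow> real) list" where
  "Pcomp fs gss = concat (map (\<lambda>(f, gs). map (comp01 f) gs) (zip fs gss))"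

end

theory Submission
  imports Defs
begin

lemma Pop1: "[a] \<in> Pop 1 \<longleftrightarrow> is_map01 a"
  by (auto simp: Pop_def)

lemma Pop1': "[a] \<in> Pop (Suc 0) \<longleftrightarrow> is_map01 a"
  by (auto simp: Pop_def)

lemma Pop1_ex: "\<theta> \<in> Pop 1 \<Longrightarrow> \<exists>a. \<theta> = [a] \<and> is_map01 a"
  by (cases \<theta>) (auto simp: Pop_def)

lemma Pcomp1: "Pcomp [a] [fs] = map (comp01 a) fs"
  by (simp add: Pcomp_def)

lemma rev1: "rev_comp Pcomp \<theta> [\<phi>] = Pcomp \<theta> [\<phi>]"
  by (simp add: rev_comp_def)

lemma mk_map01:
  assumes "h ` I01 \<subseteq> I01" "mono_on I01 h" "continuous_on I01 h"
  shows "is_map01 (\<lambda>x. if x \<in> I01 then h x else 0)"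
proof -
  have "continuous_on I01 (\<lambda>x. if x \<in> I01 then h x else 0)"
    using assms(3) continuous_on_cong[of I01 I01 "\<lambda>x. if x \<in> I01 then h x else 0" h] by auto
  moreover have "mono_on I01 (\<lambda>x. if x \<in> I01 then h x else 0)"
    using assms(2) by (auto simp: mono_on_def)
  ultimately show ?thesis using assms(1) by (auto simp: is_map01_def)
qed

lemma const_part:
  assumes "[g] \<in> Pop 1"
  shows "op_constant Pop Pcomp [g] \<longleftrightarrow> (\<exists>c. \<forall>t\<in>I01. g t = c)"
proof
  assume H: "op_constant Pop Pcomp [g]"
  have "g t = g 0" if t: "t \<in> I01" for t
  proof -
    define k where "k = (\<lambda>s::real. \<lambda>x. if x \<in> I01 then (\<lambda>_. s) x else (0::real))"
    have "is_map01 (k s)" if "s \<in> I01" for s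
      unfolding k_def by (rule mk_map01) (use that in \<open>auto simp: mono_on_def\<close>)
    moreover have z: "(0::real) \<in> I01" by (simp add: I01_def)
    ultimately have "[k t] \<in> Pop 1" "[k 0] \<in> Pop 1" using t by (auto simp: Pop1 Pop1')
    with H have "Pcomp [g] [[k t]] = Pcomp [g] [[k 0]]"
      unfolding op_constant_def by blast
    hence "comp01 g (k t) = comp01 g (k 0)" by (simp add: Pcomp1)
    hence "comp01 g (k t) 0 = comp01 g (k 0) 0" by simp
    thus ?thesis using z by (simp add: comp01_def k_def)
  qed
  thus "\<exists>c. \<forall>t\<in>I01. g t = c" by blast
next
  assume "\<exists>c. \<forall>t\<in>I01. g t = c"
  then obtain c where c: "\<forall>t\<in>I01. g t = c" by blast
  show "op_constant Pop Pcomp [g]"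
    unfolding op_constant_def
  proof (intro allI ballI)
    fix n \<phi> \<phi>' assume p: "\<phi> \<in> Pop n" "\<phi>' \<in> Pop n"
    have m: "\<And>f x. f \<in> set \<phi> \<or> f \<in> set \<phi>' \<Longrightarrow> x \<in> I01 \<Longrightarrow> f x \<in> I01"
      using p unfolding Pop_def is_map01_def by blast
    have "comp01 g (\<phi> ! i) = comp01 g (\<phi>' ! i)" if "i < n" for i
    proof -
      have "\<phi> ! i \<in> set \<phi>" "\<phi>' ! i \<in> set \<phi>'" using p that by (auto simp: Pop_def)
      thus ?thesis using m c unfolding comp01_def by (auto intro!: ext)
    qed
    thus "Pcomp [g] [\<phi>] = Pcomp [g] [\<phi>']"
      using p by (auto simp: Pcomp1 Pop_def intro!: nth_equalityI)
  qed
qed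

lemma surj_part:
  assumes fs: "fs \<in> Pop n"
  shows "op_surjective Pop Pcomp fs \<longleftrightarrow> (\<Union>f\<in>set fs. f ` I01) = I01"
proof -
  have mf: "\<And>f. f \<in> set fs \<Longrightarrow> is_map01 f" using fs by (auto simp: Pop_def)
  have sub: "(\<Union>f\<in>set fs. f ` I01) \<subseteq> I01" using mf by (auto simp: is_map01_def)
  show ?thesis
  proof
    assume S: "op_surjective Pop Pcomp fs"
    show "(\<Union>f\<in>set fs. f ` I01) = I01"
    proof (rule ccontr)
      assume "(\<Union>f\<in>set fs. f ` I01) \<noteq> I01"
      with sub obtain y where y: "y \<in> I01" "\<And>f. f \<in> set fs \<Longrightarrow> y \<notin> f ` I01" by blast
      define M where "M = insert 1 {f 0 | f. f \<in> set fs \<and> f 0 > y}"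
      define m where "m = Min M"
      have fM: "finite M" unfolding M_def by auto
      have "y < m" unfolding m_def using fM y(1)
        by (subst Min_gr_iff) (auto simp: M_def I01_def)
      have m1: "m \<le> 1" unfolding m_def using fM by (auto simp: M_def)
      have gap: "\<not> (y < x \<and> x < m)" if f: "f \<in> set fs" and t: "t \<in> I01" and x: "x = f t" for f t x
      proof
        assume xm: "y < x \<and> x < m"
        have z: "(0::real) \<in> I01" by (simp add: I01_def)
        have mo: "f 0 \<le> f t" using mf[OF f] z t unfolding is_map01_def mono_on_def
          by (auto simp: I01_def)
        show False
        proof (cases "f 0 > y")
          case True
          hence "f 0 \<in> M" using f by (auto simp: M_def)
          hence "m \<le> f 0" unfolding m_def using fM by auto
          thus False using mo xm x by auto
        next
          case False
          hence "f 0 < y" using y(2)[OF f] z by (metis image_eqI linorder_neqE_linordered_idom)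
          have "connected (f ` I01)"
            apply (rule connected_continuous_image)
            using mf[OF f] apply (simp add: is_map01_def)
            by (simp add: I01_def is_interval_connected)
          hence "is_interval (f ` I01)" by (simp add: is_interval_connected_1)
          hence "y \<in> f ` I01"
            using \<open>f 0 < y\<close> xm x z t
            by (meson imageI less_imp_le mem_is_interval_1_I)
          thus False using y(2)[OF f] by blast
        qed
      qed
      define h where "h = (\<lambda>x::real. min x (max y (2*x - m)))"
      define a where "a = (\<lambda>x::real. if x \<in> I01 then x else 0)"
      define b where "b = (\<lambda>x. if x \<in> I01 then h x else 0)"
      have ma: "is_map01 a" unfolding a_def
        by (rule mk_map01) (auto simp: mono_on_def intro: continuous_on_id)
      have mb: "is_map01 b" unfolding b_def
      proof (rule mk_map01)
        show "h ` I01 \<subseteq> I01" using y(1) by (auto simp: h_def I01_def)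
        show "mono_on I01 h" by (auto simp: mono_on_def h_def)
        show "continuous_on I01 h" unfolding h_def by (intro continuous_intros)
      qed
      have "Pcomp [a] [fs] = Pcomp [b] [fs]"
        unfolding Pcomp1 map_eq_conv
      proof
        fix f assume f: "f \<in> set fs"
        show "comp01 a f = comp01 b f"
        proof
          fix x show "comp01 a f x = comp01 b f x"
          proof (cases "x \<in> I01")
            case True
            hence fx: "f x \<in> I01" using mf[OF f] by (auto simp: is_map01_def)
            have "\<not> (y < f x \<and> f x < m)" using gap[OF f True] by simp
            hence "h (f x) = f x" unfolding h_def using \<open>y < m\<close> by auto
            thus ?thesis using True fx by (simp add: comp01_def a_def b_def)
          qed (simp add: comp01_def)
        qed
      qed
      moreover have "[a] \<in> Pop 1" "[b] \<in> Pop 1" using ma mb by (simp_all only: Pop1)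
      ultimately have "[a] = [b]" using S unfolding op_surjective_def by blast
      hence "a ((y+m)/2) = b ((y+m)/2)" by simp
      moreover have "(y+m)/2 \<in> I01" using y(1) \<open>y < m\<close> m1 by (auto simp: I01_def)
      moreover have "h ((y+m)/2) = y" unfolding h_def using \<open>y < m\<close> by (simp add: field_simps)
      ultimately show False using \<open>y < m\<close> by (simp add: a_def b_def)
    qed
  next
    assume U: "(\<Union>f\<in>set fs. f ` I01) = I01"
    show "op_surjective Pop Pcomp fs"
      unfolding op_surjective_def
    proof (intro ballI impI)
      fix \<theta> \<theta>' assume t: "\<theta> \<in> Pop 1" "\<theta>' \<in> Pop 1" and e: "Pcomp \<theta> [fs] = Pcomp \<theta>' [fs]"
      obtain a b where ab: "\<theta> = [a]" "\<theta>' = [b]" "is_map01 a" "is_map01 b"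
        using Pop1_ex[OF t(1)] Pop1_ex[OF t(2)] by blast
      have "a z = b z" for z
      proof (cases "z \<in> I01")
        case True
        then obtain f x where f: "f \<in> set fs" "x \<in> I01" "z = f x" using U by blast
        have "comp01 a f = comp01 b f" using e f(1) by (simp add: ab Pcomp1 map_eq_conv)
        hence "comp01 a f x = comp01 b f x" by simp
        thus ?thesis using f by (simp add: comp01_def)
      next
        case False thus ?thesis using ab by (simp add: is_map01_def)
      qed
      thus "\<theta> = \<theta>'" using ab by auto
    qed
  qed
qed

theorem mainTheorem3:
  shows "(\<forall>g. [g] \<in> Pop 1 \<longrightarrow>
            (op_constant Pop Pcomp [g] \<longleftrightarrow> (\<exists>c. \<forall>t\<in>I01. g t = c)))
       \<and> (\<forall>n fs. fs \<in> Pop n \<longrightarrow>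
            (op_surjective Pop Pcomp fs \<longleftrightarrow> (\<Union>f\<in>set fs. f ` I01) = I01))
       \<and> (\<forall>g. [g] \<in> Pop 1 \<longrightarrow>
            (op_constant Pop (rev_comp Pcomp) [g] \<longleftrightarrow> (\<exists>c. \<forall>t\<in>I01. g t = c)))
       \<and> (\<forall>n fs. fs \<in> Pop n \<longrightarrow>
            (op_surjective Pop (rev_comp Pcomp) fs \<longleftrightarrow> (\<Union>f\<in>set fs. f ` I01) = I01))"
proof -
  have c: "op_constant Pop (rev_comp Pcomp) g = op_constant Pop Pcomp g" for g
    by (simp add: op_constant_def rev1)
  have s: "op_surjective Pop (rev_comp Pcomp) g = op_surjective Pop Pcomp g" for g
    by (simp add: op_surjective_def rev1)
  show ?thesis using const_part surj_part by (simp add: c s)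
qed

end
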